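(* Consider the Double TFM with all transactions of common size $s>0$, history $H$ with burning fee $r$, and a set $M_0$ of user transactions with $|M_0|=w>c_{block}$ (congestion). Suppose all includers and the block producer follow the indicated allocation rules and add no fake transactions, and let $B_k$ be the resulting block. Then for every transaction $t\in M_0\setminus B_k$ there exists a bid $b_t$ for $t$ such that, when $b_t$ replaces the original bid of $t$ and all other transactions and bids are unchanged, and all includers and the block producer follow the indicated allocation rules without fake transactions, $t$ is included in at least one inclusion list and in the block.
   Context: Model: in one slot there are users, $m$ includers with distinct orders $1,\dots,m$ (order $1$ is best), and one block producer. Each transaction has size $s$. An includer chooses an inclusion list (at most $c_{Incl}$ transactions) and the block producer, seeing the lists, builds a block (at most $c_{block}$ transactions). Every transaction in the block pays burning fee $r s$. The block producer incurs cost $\mu^{Cost}_{BP}\ge0$ per unit of size per user transaction in its block; each includer incurs cost $\mu^{Cost}_{CM}\ge0$ per unit of size per user transaction in its list. Double TFM: a bid is $b_t=(\delta^{CM}_t,\delta^{BP}_t,c_t)$ with all entries nonnegative reals. The block producer fee of $t$ is $\max\{\min\{\delta^{BP}_t s,\ c_t s-rs\},0\}$ (paid to the block producer when $t$ is in the block); the committee fee is $\max\{\min\{\delta^{CM}_t s,\ c_t s-rs-\min\{\delta^{BP}_t s, c_t s-rs\}\},0\}$ (paid to the smallest-order includer that listed $t$, only if $t$ is in the block). Indicated allocation rules. Block producer: among transactions with $c_t\ge r+\mu^{Cost}_{BP}$ and $\delta^{BP}_t\ge \mu^{Cost}_{BP}$, include those with the highest block producer fee (deterministic tie-breaking) until the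 block is full or none remain. Includer of order $j$: compute the set $S$ of transactions the block producer following its rule would include; discard from $S$ those with committee fee below $\mu^{Cost}_{CM} s$; sort the rest by committee fee decreasingly (deterministic tie-breaking); includer $j$ includes the transactions in positions $(j-1)c_{Incl}+1,\dots,jc_{Incl}$ of this sorted list (if present). *)

theory Defs
  imports Main "HOL.Real"
begin

text \<open>A bid is a triple (delta_CM, delta_BP, c) of reals.\<close>
type_synonym bid = "real \<times> real \<times> real"

definition valid_bid :: "bid \<Rightarrow> bool" where
  "valid_bid b = (case b of (dcm, dbp, c) \<Rightarrow> 0 \<le> dcm \<and> 0 \<le> dbp \<and> 0 \<le> c)"

definition bp_fee :: "real \<Rightarrow> real \<Rightarrow> bid \<Rightarrow> real" where
  "bp_fee r s b = (case b of (dcm, dbp, c) \<Rightarrow> max (min (dbp * s) (c * s - r * s)) 0)"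

definition cm_fee :: "real \<Rightarrow> real \<Rightarrow> bid \<Rightarrow> real" where
  "cm_fee r s b = (case b of (dcm, dbp, c) \<Rightarrow>
      max (min (dcm * s) (c * s - r * s - min (dbp * s) (c * s - r * s))) 0)"

text \<open>Position (0-based) of x in A when A is sorted decreasingly by key f,
  ties broken deterministically by the injective rank tb (smaller tb first).\<close>
definition sort_pos :: "('a \<Rightarrow> real) \<Rightarrow> ('a \<Rightarrow> nat) \<Rightarrow> 'a set \<Rightarrow> 'a \<Rightarrow> nat" where
  "sort_pos f tb A x = card {y \<in> A. f x < f y \<or> (f y = f x \<and> tb y < tb x)}"

definition bp_block ::
  "real \<Rightarrow> real \<Rightarrow> real \<Rightarrow> nat \<Rightarrow> ('a \<Rightarrow> nat) \<Rightarrow> 'a set \<Rightarrow> ('a \<Rightarrow> bid) \<Rightarrow> 'a set" where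
  "bp_block r s muBP cblock tbBP M bids =
    (let Cand = {t \<in> M. r + muBP \<le> snd (snd (bids t)) \<and> muBP \<le> fst (snd (bids t))}
     in {t \<in> Cand. sort_pos (\<lambda>u. bp_fee r s (bids u)) tbBP Cand t < cblock})"

text \<open>Indicated allocation rule of the includer of order j (j \<ge> 1): positions
  (j-1) cIncl + 1, ..., j cIncl (1-based) of the sorted list.\<close>
definition incl_list ::
  "real \<Rightarrow> real \<Rightarrow> real \<Rightarrow> real \<Rightarrow> nat \<Rightarrow> nat \<Rightarrow> ('a \<Rightarrow> nat) \<Rightarrow> ('a \<Rightarrow> nat)
     \<Rightarrow> 'a set \<Rightarrow> ('a \<Rightarrow> bid) \<Rightarrow> nat \<Rightarrow> 'a set" where
  "incl_list r s muBP muCM cblock cIncl tbBP tbCM M bids j =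
    (let S = {t \<in> bp_block r s muBP cblock tbBP M bids. muCM * s \<le> cm_fee r s (bids t)}
     in {t \<in> S. (j - 1) * cIncl \<le> sort_pos (\<lambda>u. cm_fee r s (bids u)) tbCM S t
               \<and> sort_pos (\<lambda>u. cm_fee r s (bids u)) tbCM S t < j * cIncl})"

end

theory Submission
  imports Defs
begin

lemma sort_pos_zero:
  assumes "\<And>y. y \<in> A \<Longrightarrow> y \<noteq> x \<Longrightarrow> f y < f x"
  shows "sort_pos f tb A x = 0"
proof -
  have "{y \<in> A. f x < f y \<or> (f y = f x \<and> tb y < tb x)} = {}"
    using assms by fastforce
  then show ?thesis unfolding sort_pos_def by (simp only: card.empty)
qed

lemma fees_nonneg: "0 \<le> bp_fee r s b" "0 \<le> cm_fee r s b"
  unfolding bp_fee_def cm_fee_def by (auto split: prod.splits)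

theorem mainTheorem2:
  fixes M0 :: "'a set" and bids :: "'a \<Rightarrow> bid"
    and r s muBP muCM :: real and m cblock cIncl :: nat
    and tbBP tbCM :: "'a \<Rightarrow> nat"
  assumes "finite M0"
    and "s > 0"
    and "muBP \<ge> 0" and "muCM \<ge> 0"
    and "m \<ge> 1" and "cblock \<ge> 1" and "cIncl \<ge> 1"
    and "inj_on tbBP M0" and "inj_on tbCM M0"
    and "\<forall>t\<in>M0. valid_bid (bids t)"
    and "card M0 > cblock"
    and "t \<in> M0 - bp_block r s muBP cblock tbBP M0 bids"
  shows "\<exists>b. valid_bid b \<and>
           (\<exists>j\<in>{1..m}. t \<in> incl_list r s muBP muCM cblock cIncl tbBP tbCM M0 (bids(t := b)) j) \<and>
           t \<in> bp_block r s muBP cblock tbBP M0 (bids(t := b))"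
proof -
  define K where "K = (\<Sum>y\<in>M0. bp_fee r s (bids y) + cm_fee r s (bids y))"
  have Kb: "bp_fee r s (bids y) \<le> K \<and> cm_fee r s (bids y) \<le> K" if "y \<in> M0" for y
  proof -
    have "bp_fee r s (bids y) + cm_fee r s (bids y) \<le> K"
      unfolding K_def
      by (rule member_le_sum) (use that assms(1) fees_nonneg in \<open>auto intro: add_nonneg_nonneg\<close>)
    then show ?thesis using fees_nonneg[of r s "bids y"] by linarith
  qed
  define X where "X = K / s + \<bar>r\<bar> + muBP + muCM + 1"
  have K0: "K \<ge> 0" unfolding K_def by (rule sum_nonneg) (use fees_nonneg in \<open>auto intro: add_nonneg_nonneg\<close>)
  have Xs: "K < X * s"
  proof -
    have "X * s = K + (\<bar>r\<bar> + muBP + muCM + 1) * s" unfolding X_def using assms(2)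
      by (simp add: field_simps)
    moreover have "(\<bar>r\<bar> + muBP + muCM + 1) * s > 0" using assms(2-4) by auto
    ultimately show ?thesis by linarith
  qed
  have X0: "X \<ge> 0" "X \<ge> muBP" "X \<ge> muCM" "X \<ge> - r"
  proof -
    have "K / s \<ge> 0" using K0 assms(2) by simp
    then show "X \<ge> 0" "X \<ge> muBP" "X \<ge> muCM" "X \<ge> - r"
      unfolding X_def using assms(3,4) by auto
  qed
  define b :: bid where "b = (X, X, r + 2 * X)"
  define bids' where "bids' = bids(t := b)"
  have Xs0: "X * s \<ge> 0" using X0 assms(2) by simp
  have bpb: "bp_fee r s b = X * s"
  proof -
    have "(r + 2 * X) * s - r * s = 2 * (X * s)" by (simp add: algebra_simps)
    then show ?thesis unfolding bp_fee_def b_def using Xs0 by simp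
  qed
  have cmb: "cm_fee r s b = X * s"
  proof -
    have "(r + 2 * X) * s - r * s = 2 * (X * s)" by (simp add: algebra_simps)
    then show ?thesis unfolding cm_fee_def b_def using Xs0 by simp
  qed
  have vb: "valid_bid b" unfolding valid_bid_def b_def using X0 by auto
  have tM: "t \<in> M0" using assms(12) by simp
  define Cand where "Cand = {u \<in> M0. r + muBP \<le> snd (snd (bids' u)) \<and> muBP \<le> fst (snd (bids' u))}"
  have tC: "t \<in> Cand" unfolding Cand_def bids'_def b_def using tM X0 by auto
  have "sort_pos (\<lambda>u. bp_fee r s (bids' u)) tbBP Cand t = 0"
    by (rule sort_pos_zero) (use Kb Xs bpb in \<open>auto simp: Cand_def bids'_def intro: le_less_trans\<close>)
  then have tB: "t \<in> bp_block r s muBP cblock tbBP M0 bids'"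
    unfolding bp_block_def Let_def using tC assms(6) Cand_def by auto
  define S where "S = {u \<in> bp_block r s muBP cblock tbBP M0 bids'. muCM * s \<le> cm_fee r s (bids' u)}"
  have tS: "t \<in> S" unfolding S_def using tB cmb X0 assms(2)
    by (auto simp: bids'_def intro: mult_right_mono)
  have "sort_pos (\<lambda>u. cm_fee r s (bids' u)) tbCM S t = 0"
    by (rule sort_pos_zero) (use Kb Xs cmb in \<open>auto simp: S_def bids'_def bp_block_def Let_def intro: le_less_trans\<close>)
  then have "t \<in> incl_list r s muBP muCM cblock cIncl tbBP tbCM M0 bids' 1"
    unfolding incl_list_def Let_def using tS assms(7) S_def by auto
  then have "\<exists>j\<in>{1..m}. t \<in> incl_list r s muBP muCM cblock cIncl tbBP tbCM M0 bids' j"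
    using assms(5) by (intro bexI[of _ 1]) auto
  then show ?thesis using vb tB unfolding bids'_def by blast
qed

end
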